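(* In the non-binary voting game, let $e(N)$ be any function of $N$. For every $N$ large enough that the number of friendly agents is less than $\mu N$ and the number of unfriendly agents is less than $(1-\mu)N$, and every regular strategy profile $\Sigma^*$ with $N$ agents satisfying $A(\Sigma^* )\ge1-e(N)$, the profile $\Sigma^*$ is an $\varepsilon$-strong Bayes Nash Equilibrium with $\varepsilon=\mathcal{W}B((\mathcal{W}-1)B+1)\,e(N)$.
   Context: Non-binary voting game. $N$ agents each vote for $\mathbf{A}$ or $\mathbf{R}$. World state $W\in\{1,\dots,\mathcal{W}\}$ (unobserved), prior $P_w>0$. Conditional on $W$, each agent independently receives a signal $S_n\in\{1,\dots,M\}$ with $P_{mw}=\Pr[S_n=m\mid W=w]$, satisfying stochastic dominance ($\Pr[S_n\ge m\mid w_1]>\Pr[S_n\ge m\mid w_2]$ for $w_1>w_2$, $m\ge2$). Threshold $\mu\in(0,1)$: $\mathbf{A}$ wins iff at least $\mu N$ agents vote $\mathbf{A}$, else $\mathbf{R}$. Agent $n$ has utility $v_n:\{1,\dots,\mathcal{W}\}\times\{\mathbf{A},\mathbf{R}\}\to\{0,\dots,B\}$ ($B$ a positive integer) with $v_n(w,\mathbf{A})$ strictly increasing, $v_n(w,\mathbf{R})$ strictly decreasing in $w$, and $v_n(w,\mathbf{A})\ne v_n(w,\mathbf{R})$. Constants $\alpha^{\mathbf{A}}_w,\alpha^{\mathbf{R}}_w=1-\alpha^{\mathbf{A}}_w$: exactly $\lfloor\alpha^{\mathbf{R}}_wN\rfloor$ agents prefer $\mathbf{R}$ in state $w$; $\alpha^{\mathbf{A}}_w\ne\mu$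 and rounding does not flip the comparison with $\mu$. Informed majority decision in $w$: $\mathbf{A}$ if $\alpha^{\mathbf{A}}_w>\mu$, else $\mathbf{R}$. $\mathcal{L}=\{w:\alpha^{\mathbf{A}}_w<\mu\}$, $\mathcal{H}=\{w:\alpha^{\mathbf{A}}_w>\mu\}$, both nonempty. For agent $n$, $\mathcal{L}_n=\{w:v_n(w,\mathbf{R})>v_n(w,\mathbf{A})\}$, $\mathcal{H}_n=\{w:v_n(w,\mathbf{A})>v_n(w,\mathbf{R})\}$; friendly if $\mathcal{L}\cap\mathcal{H}_n\ne\emptyset$, unfriendly if $\mathcal{H}\cap\mathcal{L}_n\ne\emptyset$, contingent if $\mathcal{L}_n=\mathcal{L}$. Strategy $\sigma=(\beta_1,\dots,\beta_M)$, $\beta_m$ = probability of voting $\mathbf{A}$ on signal $m$. Regular profile: friendly agents always vote $\mathbf{A}$, unfriendly always vote $\mathbf{R}$. $\lambda^{\mathbf{X}}_w(\Sigma)$: ex-ante probability that $\mathbf{X}$ wins in state $w$. Fidelity $A(\Sigma)=\sum_{w\in\mathcal{L}}P_w\lambda^{\mathbf{R}}_w(\Sigma)+\sum_{w\in\mathcal{H}}P_w\lambda^{\mathbf{A}}_w(\Sigma)$. Expected utility $u_n(\Sigma)=\sum_wP_w(\lambda^{\mathbf{A}}_w(\Sigma)v_n(w,\mathbf{A})+\lambda^{\mathbf{R}}_w(\Sigma)v_n(w,\mathbf{R}))$. $\Sigma$ is an $\varepsilon$-strong Bayes Nash Equilibrium if there is no set $D$ of agents and profile $\Sigma'$ with $\sigma'_n=\sigma_n$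 for $n\notin D$, $u_n(\Sigma')\ge u_n(\Sigma)$ for all $n\in D$ and $u_n(\Sigma')>u_n(\Sigma)+\varepsilon$ for some $n\in D$. *)

theory Defs
  imports Main Complex_Main
begin

text \<open>Non-binary voting game. Agents are indexed by 0..<N, world states by 1..W,
signals by 1..M. A strategy profile Sg assigns to agent n and signal m the
probability Sg n m of voting A.\<close>

datatype outcome = Acc | Rej

definition voteA_prob :: "nat \<Rightarrow> (nat \<Rightarrow> nat \<Rightarrow> real) \<Rightarrow> (nat \<Rightarrow> nat \<Rightarrow> real) \<Rightarrow> nat \<Rightarrow> nat \<Rightarrow> real" where
  "voteA_prob M Ps Sg n w = (\<Sum>m\<in>{1..M}. Ps m w * Sg n m)"

definition vote_set_prob :: "nat \<Rightarrow> nat \<Rightarrow> (nat \<Rightarrow> nat \<Rightarrow> real) \<Rightarrow> (nat \<Rightarrow> nat \<Rightarrow> real) \<Rightarrow> nat \<Rightarrow> nat set \<Rightarrow> real" where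
  "vote_set_prob N M Ps Sg w S =
     (\<Prod>n\<in>S. voteA_prob M Ps Sg n w) * (\<Prod>n\<in>{0..<N} - S. 1 - voteA_prob M Ps Sg n w)"

definition lamA :: "nat \<Rightarrow> real \<Rightarrow> nat \<Rightarrow> (nat \<Rightarrow> nat \<Rightarrow> real) \<Rightarrow> (nat \<Rightarrow> nat \<Rightarrow> real) \<Rightarrow> nat \<Rightarrow> real" where
  "lamA N mu M Ps Sg w =
     (\<Sum>S\<in>{S. S \<subseteq> {0..<N} \<and> real (card S) \<ge> mu * real N}. vote_set_prob N M Ps Sg w S)"

definition lamR :: "nat \<Rightarrow> real \<Rightarrow> nat \<Rightarrow> (nat \<Rightarrow> nat \<Rightarrow> real) \<Rightarrow> (nat \<Rightarrow> nat \<Rightarrow> real) \<Rightarrow> nat \<Rightarrow> real" where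
  "lamR N mu M Ps Sg w =
     (\<Sum>S\<in>{S. S \<subseteq> {0..<N} \<and> real (card S) < mu * real N}. vote_set_prob N M Ps Sg w S)"

definition fidelity :: "nat \<Rightarrow> real \<Rightarrow> nat \<Rightarrow> nat \<Rightarrow> (nat \<Rightarrow> real) \<Rightarrow> (nat \<Rightarrow> nat \<Rightarrow> real) \<Rightarrow> (nat \<Rightarrow> real) \<Rightarrow> (nat \<Rightarrow> nat \<Rightarrow> real) \<Rightarrow> real" where
  "fidelity N mu W M P Ps alphaA Sg =
     (\<Sum>w\<in>{w\<in>{1..W}. alphaA w < mu}. P w * lamR N mu M Ps Sg w)
   + (\<Sum>w\<in>{w\<in>{1..W}. alphaA w > mu}. P w * lamA N mu M Ps Sg w)"

definition exp_util :: "nat \<Rightarrow> real \<Rightarrow> nat \<Rightarrow> nat \<Rightarrow> (nat \<Rightarrow> real) \<Rightarrow> (nat \<Rightarrow> nat \<Rightarrow> real) \<Rightarrow> (nat \<Rightarrow> nat \<Rightarrow> outcome \<Rightarrow> nat) \<Rightarrow> (nat \<Rightarrow> nat \<Rightarrow> real) \<Rightarrow> nat \<Rightarrow> real" where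
  "exp_util N mu W M P Ps v Sg n =
     (\<Sum>w\<in>{1..W}. P w * (lamA N mu M Ps Sg w * real (v n w Acc)
                          + lamR N mu M Ps Sg w * real (v n w Rej)))"

definition valid_profile :: "nat \<Rightarrow> nat \<Rightarrow> (nat \<Rightarrow> nat \<Rightarrow> real) \<Rightarrow> bool" where
  "valid_profile N M Sg \<longleftrightarrow> (\<forall>n<N. \<forall>m\<in>{1..M}. 0 \<le> Sg n m \<and> Sg n m \<le> 1)"

definition friendly :: "real \<Rightarrow> nat \<Rightarrow> (nat \<Rightarrow> real) \<Rightarrow> (nat \<Rightarrow> nat \<Rightarrow> outcome \<Rightarrow> nat) \<Rightarrow> nat \<Rightarrow> bool" where
  "friendly mu W alphaA v n \<longleftrightarrow> (\<exists>w\<in>{1..W}. alphaA w < mu \<and> v n w Acc > v n w Rej)"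

definition unfriendly :: "real \<Rightarrow> nat \<Rightarrow> (nat \<Rightarrow> real) \<Rightarrow> (nat \<Rightarrow> nat \<Rightarrow> outcome \<Rightarrow> nat) \<Rightarrow> nat \<Rightarrow> bool" where
  "unfriendly mu W alphaA v n \<longleftrightarrow> (\<exists>w\<in>{1..W}. alphaA w > mu \<and> v n w Rej > v n w Acc)"

definition regular_profile :: "nat \<Rightarrow> real \<Rightarrow> nat \<Rightarrow> nat \<Rightarrow> (nat \<Rightarrow> real) \<Rightarrow> (nat \<Rightarrow> nat \<Rightarrow> outcome \<Rightarrow> nat) \<Rightarrow> (nat \<Rightarrow> nat \<Rightarrow> real) \<Rightarrow> bool" where
  "regular_profile N mu W M alphaA v Sg \<longleftrightarrow>
     valid_profile N M Sg \<and>
     (\<forall>n<N. friendly mu W alphaA v n \<longrightarrow> (\<forall>m\<in>{1..M}. Sg n m = 1)) \<and>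
     (\<forall>n<N. unfriendly mu W alphaA v n \<longrightarrow> (\<forall>m\<in>{1..M}. Sg n m = 0))"

definition strong_BNE :: "real \<Rightarrow> nat \<Rightarrow> real \<Rightarrow> nat \<Rightarrow> nat \<Rightarrow> (nat \<Rightarrow> real) \<Rightarrow> (nat \<Rightarrow> nat \<Rightarrow> real) \<Rightarrow> (nat \<Rightarrow> nat \<Rightarrow> outcome \<Rightarrow> nat) \<Rightarrow> (nat \<Rightarrow> nat \<Rightarrow> real) \<Rightarrow> bool" where
  "strong_BNE eps N mu W M P Ps v Sg \<longleftrightarrow>
     \<not> (\<exists>D Sg'. D \<subseteq> {0..<N} \<and> valid_profile N M Sg' \<and>
          (\<forall>n<N. n \<notin> D \<longrightarrow> (\<forall>m\<in>{1..M}. Sg' n m = Sg n m)) \<and>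
          (\<forall>n\<in>D. exp_util N mu W M P Ps v Sg' n \<ge> exp_util N mu W M P Ps v Sg n) \<and>
          (\<exists>n\<in>D. exp_util N mu W M P Ps v Sg' n > exp_util N mu W M P Ps v Sg n + eps))"

end

theory Submission imports Defs begin

definition Gp :: "nat set \<Rightarrow> (nat \<Rightarrow> real) \<Rightarrow> nat set \<Rightarrow> real" where
  "Gp I p S = (\<Prod>n\<in>S. p n) * (\<Prod>n\<in>I - S. 1 - p n)"

definition G :: "nat set \<Rightarrow> (nat \<Rightarrow> real) \<Rightarrow> real \<Rightarrow> real" where
  "G I p t = (\<Sum>S\<in>{S. S \<subseteq> I \<and> real (card S) \<ge> t}. Gp I p S)"

lemma G_insert:
  assumes fin: "finite I" and ni: "i \<notin> I"
  shows "G (insert i I) p t = p i * G I p (t - 1) + (1 - p i) * G I p t"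
proof -
  define A where "A = {S. S \<subseteq> I \<and> real (card S) \<ge> t}"
  define B where "B = {S. S \<subseteq> I \<and> real (card S) \<ge> t - 1}"
  have finA: "finite A" unfolding A_def using fin by simp
  have finB: "finite B" unfolding B_def using fin by simp
  have eq: "{S. S \<subseteq> insert i I \<and> real (card S) \<ge> t} = A \<union> insert i ` B"
  proof (rule set_eqI, rule iffI)
    fix S assume S: "S \<in> {S. S \<subseteq> insert i I \<and> real (card S) \<ge> t}"
    have Ssub: "S \<subseteq> insert i I" and Sc: "real (card S) \<ge> t" using S by simp_all
    show "S \<in> A \<union> insert i ` B"
    proof (cases "i \<in> S")
      case True
      have s1: "S - {i} \<subseteq> I" using Ssub by blast
      have finS: "finite S" using Ssub fin finite_subset by blast
      have c: "card S = Suc (card (S - {i}))" using card.remove[OF finS True] .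
      have "real (card (S - {i})) \<ge> t - 1" using Sc c by simp
      hence "S - {i} \<in> B" using s1 unfolding B_def by simp
      moreover have "S = insert i (S - {i})" using True by blast
      ultimately show ?thesis by blast
    next
      case False
      hence "S \<subseteq> I" using Ssub by blast
      hence "S \<in> A" using Sc unfolding A_def by simp
      then show ?thesis by blast
    qed
  next
    fix S assume S: "S \<in> A \<union> insert i ` B"
    show "S \<in> {S. S \<subseteq> insert i I \<and> real (card S) \<ge> t}"
    proof (cases "S \<in> A")
      case True
      hence "S \<subseteq> I" "real (card S) \<ge> t" unfolding A_def by simp_all
      then show ?thesis by blast
    next
      case False
      then obtain T where T: "T \<in> B" "S = insert i T" using S by blast
      have TI: "T \<subseteq> I" and Tc: "real (card T) \<ge> t - 1" using T(1) unfolding B_def by simp_all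
      have finT: "finite T" using TI fin finite_subset by blast
      have niT: "i \<notin> T" using TI ni by blast
      have "card S = Suc (card T)" using T(2) finT niT by simp
      hence "real (card S) \<ge> t" using Tc by simp
      moreover have "S \<subseteq> insert i I" using T(2) TI by blast
      ultimately show ?thesis by blast
    qed
  qed
  have disj: "A \<inter> insert i ` B = {}" unfolding A_def B_def using ni by auto
  have inj: "inj_on (insert i) B"
  proof (rule inj_onI)
    fix S T assume ST: "S \<in> B" "T \<in> B" "insert i S = insert i T"
    then have "i \<notin> S" "i \<notin> T" using ni unfolding B_def by auto
    then show "S = T" using ST(3) by (metis Diff_insert_absorb)
  qed
  have s1: "(\<Sum>S\<in>A. Gp (insert i I) p S) = (1 - p i) * G I p t"
  proof -
    have "\<And>S. S \<in> A \<Longrightarrow> Gp (insert i I) p S = (1 - p i) * Gp I p S"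
    proof -
      fix S assume "S \<in> A"
      hence SI: "S \<subseteq> I" unfolding A_def by auto
      have "insert i I - S = insert i (I - S)" using SI ni by auto
      moreover have "i \<notin> I - S" using ni by auto
      moreover have "finite (I - S)" using fin by auto
      ultimately show "Gp (insert i I) p S = (1 - p i) * Gp I p S"
        unfolding Gp_def by simp
    qed
    then show ?thesis unfolding G_def A_def[symmetric] by (simp add: sum_distrib_left)
  qed
  have s2: "(\<Sum>S\<in>insert i ` B. Gp (insert i I) p S) = p i * G I p (t - 1)"
  proof -
    have "(\<Sum>S\<in>insert i ` B. Gp (insert i I) p S) = (\<Sum>S\<in>B. Gp (insert i I) p (insert i S))"
      using inj by (simp add: sum.reindex)
    also have "\<dots> = (\<Sum>S\<in>B. p i * Gp I p S)"
    proof (rule sum.cong)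
      fix S assume "S \<in> B"
      hence SI: "S \<subseteq> I" unfolding B_def by auto
      have "insert i I - insert i S = I - S" using SI ni by auto
      moreover have "i \<notin> S" using SI ni by auto
      moreover have "finite S" using SI fin by (meson finite_subset)
      ultimately show "Gp (insert i I) p (insert i S) = p i * Gp I p S"
        unfolding Gp_def by simp
    qed simp
    finally show ?thesis unfolding G_def B_def[symmetric] by (simp add: sum_distrib_left)
  qed
  have "G (insert i I) p t = (\<Sum>S\<in>A \<union> insert i ` B. Gp (insert i I) p S)"
    unfolding G_def eq ..
  also have "\<dots> = (\<Sum>S\<in>A. Gp (insert i I) p S) + (\<Sum>S\<in>insert i ` B. Gp (insert i I) p S)"
    using finA finB disj by (simp add: sum.union_disjoint)
  finally show ?thesis using s1 s2 by simp
qed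

lemma G_nonneg:
  assumes "\<forall>n\<in>I. 0 \<le> p n \<and> p n \<le> 1"
  shows "0 \<le> G I p t"
  unfolding G_def Gp_def
  by (rule sum_nonneg, rule mult_nonneg_nonneg; rule prod_nonneg; use assms in auto)

lemma G_anti_t:
  assumes fin: "finite I" and "\<forall>n\<in>I. 0 \<le> p n \<and> p n \<le> 1" and "s \<le> t"
  shows "G I p t \<le> G I p s"
  unfolding G_def
proof (rule sum_mono2)
  show "finite {S. S \<subseteq> I \<and> s \<le> real (card S)}" using fin by simp
  show "{S. S \<subseteq> I \<and> t \<le> real (card S)} \<subseteq> {S. S \<subseteq> I \<and> s \<le> real (card S)}" using assms by auto
  fix S assume "S \<in> {S. S \<subseteq> I \<and> s \<le> real (card S)} - {S. S \<subseteq> I \<and> t \<le> real (card S)}"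
  hence "S \<subseteq> I" by auto
  then show "0 \<le> Gp I p S" unfolding Gp_def
    by (intro mult_nonneg_nonneg prod_nonneg; use assms in auto)
qed

lemma G_mono_p:
  assumes fin: "finite I"
    and p: "\<forall>n\<in>I. 0 \<le> p n \<and> p n \<le> 1" and q: "\<forall>n\<in>I. 0 \<le> q n \<and> q n \<le> 1"
    and pq: "\<forall>n\<in>I. p n \<le> q n"
  shows "G I p t \<le> G I q t"
  using fin p q pq
proof (induction I arbitrary: t rule: finite_induct)
  case empty
  have "G {} p t = G {} q t" unfolding G_def Gp_def by (intro sum.cong refl) simp
  then show ?case by simp
next
  case (insert i I)
  have IH1: "G I p (t - 1) \<le> G I q (t - 1)" using insert.IH insert.prems by simp
  have IH2: "G I p t \<le> G I q t" using insert.IH insert.prems by simp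
  have pi: "0 \<le> p i" "p i \<le> q i" "q i \<le> 1" using insert.prems by auto
  have mt: "G I q t \<le> G I q (t - 1)" using insert.prems insert.hyps by (intro G_anti_t) auto
  have "G (insert i I) p t = p i * G I p (t - 1) + (1 - p i) * G I p t"
    using insert by (simp add: G_insert)
  also have "\<dots> \<le> p i * G I q (t - 1) + (1 - p i) * G I q t"
    using IH1 IH2 pi by (intro add_mono mult_left_mono) auto
  also have "\<dots> \<le> q i * G I q (t - 1) + (1 - q i) * G I q t"
  proof -
    have "(q i - p i) * G I q t \<le> (q i - p i) * G I q (t - 1)"
      using mt pi by (intro mult_left_mono) auto
    then show ?thesis by (simp add: algebra_simps)
  qed
  also have "\<dots> = G (insert i I) q t" using insert by (simp add: G_insert)
  finally show ?case .
qed

lemma G_total: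
  assumes fin: "finite I"
  shows "G I p t + (\<Sum>S\<in>{S. S \<subseteq> I \<and> real (card S) < t}. Gp I p S) = 1"
proof -
  have "{S. S \<subseteq> I \<and> real (card S) \<ge> t} \<union> {S. S \<subseteq> I \<and> real (card S) < t} = Pow I" by auto
  moreover have "{S. S \<subseteq> I \<and> real (card S) \<ge> t} \<inter> {S. S \<subseteq> I \<and> real (card S) < t} = {}" by auto
  ultimately have "G I p t + (\<Sum>S\<in>{S. S \<subseteq> I \<and> real (card S) < t}. Gp I p S) = (\<Sum>S\<in>Pow I. Gp I p S)"
    unfolding G_def using fin by (subst sum.union_disjoint[symmetric]) auto
  also have "\<dots> = (\<Prod>n\<in>I. p n + (1 - p n))" unfolding Gp_def using prod_add[OF fin, of p "\<lambda>n. 1 - p n"] by simp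
  also have "\<dots> = 1" by simp
  finally show ?thesis .
qed


lemma lamA_G: "lamA N mu M Ps Sg w = G {0..<N} (\<lambda>n. voteA_prob M Ps Sg n w) (mu * real N)"
  unfolding lamA_def G_def Gp_def vote_set_prob_def by simp

lemma lamR_G: "lamR N mu M Ps Sg w = (\<Sum>S\<in>{S. S \<subseteq> {0..<N} \<and> real (card S) < mu * real N}. Gp {0..<N} (\<lambda>n. voteA_prob M Ps Sg n w) S)"
  unfolding lamR_def Gp_def vote_set_prob_def by simp

lemma pA_range:
  assumes "valid_profile N M Sg" "\<forall>m\<in>{1..M}. 0 \<le> Ps m w" "(\<Sum>m\<in>{1..M}. Ps m w) = 1" "n < N"
  shows "0 \<le> voteA_prob M Ps Sg n w \<and> voteA_prob M Ps Sg n w \<le> 1"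
proof
  show "0 \<le> voteA_prob M Ps Sg n w" unfolding voteA_prob_def
    using assms unfolding valid_profile_def by (intro sum_nonneg mult_nonneg_nonneg) auto
  have "voteA_prob M Ps Sg n w \<le> (\<Sum>m\<in>{1..M}. Ps m w)" unfolding voteA_prob_def
  proof (rule sum_mono)
    fix m assume m: "m \<in> {1..M}"
    have "Sg n m \<le> 1" "0 \<le> Ps m w" using assms m unfolding valid_profile_def by auto
    then show "Ps m w * Sg n m \<le> Ps m w" by (simp add: mult_left_le)
  qed
  then show "voteA_prob M Ps Sg n w \<le> 1" using assms by simp
qed

lemma lam_facts:
  assumes "valid_profile N M Sg" "\<forall>m\<in>{1..M}. 0 \<le> Ps m w" "(\<Sum>m\<in>{1..M}. Ps m w) = 1"
  shows "0 \<le> lamA N mu M Ps Sg w" "0 \<le> lamR N mu M Ps Sg w"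
    "lamA N mu M Ps Sg w + lamR N mu M Ps Sg w = 1"
proof -
  have r: "\<forall>n\<in>{0..<N}. 0 \<le> voteA_prob M Ps Sg n w \<and> voteA_prob M Ps Sg n w \<le> 1"
    using pA_range[where N=N and M=M and Sg=Sg and Ps=Ps and w=w, OF assms] by auto
  show "0 \<le> lamA N mu M Ps Sg w" unfolding lamA_G using G_nonneg[OF r] .
  show "0 \<le> lamR N mu M Ps Sg w" unfolding lamR_G Gp_def
    by (rule sum_nonneg, rule mult_nonneg_nonneg; rule prod_nonneg; use r in auto)
  show "lamA N mu M Ps Sg w + lamR N mu M Ps Sg w = 1"
    unfolding lamA_G lamR_G using G_total by simp
qed

lemma lamA_mono:
  assumes "valid_profile N M Sg" "valid_profile N M Sg'" "\<forall>m\<in>{1..M}. 0 \<le> Ps m w" "(\<Sum>m\<in>{1..M}. Ps m w) = 1"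
    "\<forall>n<N. voteA_prob M Ps Sg n w \<le> voteA_prob M Ps Sg' n w"
  shows "lamA N mu M Ps Sg w \<le> lamA N mu M Ps Sg' w"
  unfolding lamA_G
  by (rule G_mono_p) (use assms pA_range[where N=N and M=M and Sg=Sg and Ps=Ps and w=w, OF assms(1,3,4)] pA_range[where N=N and M=M and Sg=Sg' and Ps=Ps and w=w, OF assms(2,3,4)] in auto)

lemma termL:
  fixes P la la' dw dk Bv :: real
  assumes "0 \<le> P" "0 \<le> la'" "0 \<le> la" "dw \<le> dk" "-Bv \<le> dw" "0 \<le> Bv"
  shows "P * ((la' - la) * dw) \<le> dk * (P * max (la' - la) 0) + Bv * (P * la)"
proof (cases "la' - la \<ge> 0")
  case True
  have "(la' - la) * dw \<le> (la' - la) * dk" using True assms by (intro mult_left_mono) auto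
  hence "P * ((la' - la) * dw) \<le> P * ((la' - la) * dk)" by (rule mult_left_mono[OF _ assms(1)])
  moreover have "0 \<le> Bv * (P * la)" using assms by simp
  ultimately show ?thesis using True by (simp add: algebra_simps)
next
  case False
  have "(la' - la) * dw \<le> (la' - la) * (-Bv)" using False assms by (intro mult_left_mono_neg) auto
  also have "\<dots> = (la - la') * Bv" by (simp add: algebra_simps)
  also have "\<dots> \<le> la * Bv" using assms by (intro mult_right_mono) auto
  finally have "P * ((la' - la) * dw) \<le> P * (la * Bv)" by (rule mult_left_mono[OF _ assms(1)])
  then show ?thesis using False by (simp add: algebra_simps)
qed

lemma termH:
  fixes P la la' dw dk1 Bv :: real
  assumes "0 \<le> P" "la' \<le> 1" "dk1 \<le> dw" "dw \<le> Bv" "0 \<le> Bv" "la \<le> 1"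
  shows "P * ((la' - la) * dw) \<le> - dk1 * (P * max (la - la') 0) + Bv * (P * (1 - la))"
proof (cases "la' - la \<le> 0")
  case True
  have "(la' - la) * dw \<le> (la' - la) * dk1" using True assms by (intro mult_left_mono_neg) auto
  hence "P * ((la' - la) * dw) \<le> P * ((la' - la) * dk1)" by (rule mult_left_mono[OF _ assms(1)])
  moreover have "0 \<le> Bv * (P * (1 - la))" using assms by (intro mult_nonneg_nonneg) auto
  moreover have "- dk1 * (P * max (la - la') 0) = - dk1 * (P * (la - la'))" using True by simp
  moreover have "P * ((la' - la) * dk1) = - dk1 * (P * (la - la'))" by (simp add: algebra_simps)
  ultimately show ?thesis by linarith
next
  case False
  have "(la' - la) * dw \<le> (la' - la) * Bv" using False assms by (intro mult_left_mono) auto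
  also have "\<dots> \<le> (1 - la) * Bv" using assms by (intro mult_right_mono) auto
  finally have "P * ((la' - la) * dw) \<le> P * ((1 - la) * Bv)" by (rule mult_left_mono[OF _ assms(1)])
  moreover have "max (la - la') 0 = 0" using False by simp
  moreover have "P * ((1 - la) * Bv) = Bv * (P * (1 - la))" by (simp add: algebra_simps)
  ultimately show ?thesis by simp
qed

lemma final1:
  fixes dk dk1 dnk dnk1 Lp Hm be Bv :: real
  assumes "1 \<le> dk" "dk \<le> Bv" "dk \<le> dk1" "dnk \<le> -1" "dnk \<le> dnk1" "0 \<le> Lp" "0 \<le> Hm" "0 \<le> be"
    "0 \<le> dnk*Lp - dnk1*Hm + be"
  shows "dk*Lp - dk1*Hm + be \<le> Bv*be + be"
proof -
  have "dnk1 * Hm \<ge> dnk * Hm" using assms by (intro mult_right_mono) auto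
  hence a: "(-dnk) * (Lp - Hm) \<le> be" using assms(9) by (simp add: algebra_simps)
  have b: "Lp - Hm \<le> be"
  proof (cases "Lp - Hm \<le> 0")
    case False
    have "1 * (Lp - Hm) \<le> (-dnk) * (Lp - Hm)" using False assms by (intro mult_right_mono) auto
    then show ?thesis using a by simp
  qed (use assms in auto)
  have "dk1 * Hm \<ge> dk * Hm" using assms by (intro mult_right_mono) auto
  hence c: "dk*Lp - dk1*Hm \<le> dk * (Lp - Hm)" by (simp add: algebra_simps)
  have "dk * (Lp - Hm) \<le> Bv * be"
  proof (cases "Lp - Hm \<le> 0")
    case True
    have "dk * (Lp - Hm) \<le> 0" using True assms by (simp add: mult_nonneg_nonpos)
    moreover have "0 \<le> Bv * be" using assms by simp
    ultimately show ?thesis by linarith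
  next
    case False
    have "dk * (Lp - Hm) \<le> Bv * (Lp - Hm)" using False assms by (intro mult_right_mono) auto
    also have "\<dots> \<le> Bv * be" using b assms by (intro mult_left_mono) auto
    finally show ?thesis .
  qed
  with c show ?thesis by linarith
qed


theorem lemma2:
  fixes N W M B :: nat and mu e :: real
    and P :: "nat \<Rightarrow> real" and Ps :: "nat \<Rightarrow> nat \<Rightarrow> real"
    and v :: "nat \<Rightarrow> nat \<Rightarrow> outcome \<Rightarrow> nat" and alphaA :: "nat \<Rightarrow> real"
    and Sg :: "nat \<Rightarrow> nat \<Rightarrow> real"
  assumes W_pos: "W \<ge> 1" and M_pos: "M \<ge> 1" and N_pos: "N \<ge> 1" and B_pos: "B \<ge> 1"
    and prior_pos: "\<forall>w\<in>{1..W}. P w > 0"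
    and prior_sum: "(\<Sum>w\<in>{1..W}. P w) = 1"
    and sig_nonneg: "\<forall>w\<in>{1..W}. \<forall>m\<in>{1..M}. Ps m w \<ge> 0"
    and sig_sum: "\<forall>w\<in>{1..W}. (\<Sum>m\<in>{1..M}. Ps m w) = 1"
    and stoch_dom: "\<forall>w1\<in>{1..W}. \<forall>w2\<in>{1..W}. w1 > w2 \<longrightarrow>
        (\<forall>m\<in>{2..M}. (\<Sum>k\<in>{m..M}. Ps k w1) > (\<Sum>k\<in>{m..M}. Ps k w2))"
    and mu_range: "0 < mu" "mu < 1"
    and v_bound: "\<forall>n<N. \<forall>w\<in>{1..W}. \<forall>x. v n w x \<le> B"
    and vA_incr: "\<forall>n<N. \<forall>w1\<in>{1..W}. \<forall>w2\<in>{1..W}. w1 < w2 \<longrightarrow> v n w1 Acc < v n w2 Acc"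
    and vR_decr: "\<forall>n<N. \<forall>w1\<in>{1..W}. \<forall>w2\<in>{1..W}. w1 < w2 \<longrightarrow> v n w1 Rej > v n w2 Rej"
    and v_neq: "\<forall>n<N. \<forall>w\<in>{1..W}. v n w Acc \<noteq> v n w Rej"
    and alpha_count: "\<forall>w\<in>{1..W}.
        card {n\<in>{0..<N}. v n w Rej > v n w Acc} = nat \<lfloor>(1 - alphaA w) * real N\<rfloor>"
    and alpha_neq: "\<forall>w\<in>{1..W}. alphaA w \<noteq> mu"
    and alpha_round: "\<forall>w\<in>{1..W}.
        (real (N - nat \<lfloor>(1 - alphaA w) * real N\<rfloor>) \<ge> mu * real N) \<longleftrightarrow> alphaA w > mu"
    and L_nonempty: "\<exists>w\<in>{1..W}. alphaA w < mu"
    and H_nonempty: "\<exists>w\<in>{1..W}. alphaA w > mu"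
    and few_friendly: "real (card {n\<in>{0..<N}. friendly mu W alphaA v n}) < mu * real N"
    and few_unfriendly: "real (card {n\<in>{0..<N}. unfriendly mu W alphaA v n}) < (1 - mu) * real N"
    and regular: "regular_profile N mu W M alphaA v Sg"
    and fid: "fidelity N mu W M P Ps alphaA Sg \<ge> 1 - e"
  shows "strong_BNE (real W * real B * ((real W - 1) * real B + 1) * e) N mu W M P Ps v Sg"
proof -
  define d where "d = (\<lambda>n w. real (v n w Acc) - real (v n w Rej))"
  define L where "L = {w\<in>{1..W}. alphaA w < mu}"
  define H where "H = {w\<in>{1..W}. alphaA w > mu}"
  define k where "k = Max L"
  have valid: "valid_profile N M Sg" using regular unfolding regular_profile_def by simp
  have Hup: "w2 \<in> H" if a: "w1 \<in> H" "w1 \<le> w2" "w2 \<le> W" for w1 w2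
  proof -
    have w1: "w1 \<in> {1..W}" "alphaA w1 > mu" using a unfolding H_def by auto
    have w2: "w2 \<in> {1..W}" using w1 a by auto
    have sub: "{n\<in>{0..<N}. v n w2 Rej > v n w2 Acc} \<subseteq> {n\<in>{0..<N}. v n w1 Rej > v n w1 Acc}"
    proof
      fix n assume n: "n \<in> {n\<in>{0..<N}. v n w2 Rej > v n w2 Acc}"
      show "n \<in> {n\<in>{0..<N}. v n w1 Rej > v n w1 Acc}"
      proof (cases "w1 = w2")
        case False
        hence "w1 < w2" using a by simp
        hence "v n w1 Acc < v n w2 Acc" "v n w1 Rej > v n w2 Rej"
          using vA_incr vR_decr n w1 w2 by auto
        then show ?thesis using n by auto
      qed (use n in auto)
    qed
    have "card {n\<in>{0..<N}. v n w2 Rej > v n w2 Acc} \<le> card {n\<in>{0..<N}. v n w1 Rej > v n w1 Acc}"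
      by (rule card_mono[OF _ sub]) simp
    hence c: "nat \<lfloor>(1 - alphaA w2) * real N\<rfloor> \<le> nat \<lfloor>(1 - alphaA w1) * real N\<rfloor>"
      using alpha_count w1(1) w2 by simp
    have "real (N - nat \<lfloor>(1 - alphaA w1) * real N\<rfloor>) \<ge> mu * real N" using alpha_round w1 by auto
    moreover have "real (N - nat \<lfloor>(1 - alphaA w1) * real N\<rfloor>) \<le> real (N - nat \<lfloor>(1 - alphaA w2) * real N\<rfloor>)"
      using c by (simp add: diff_le_mono2)
    ultimately have "real (N - nat \<lfloor>(1 - alphaA w2) * real N\<rfloor>) \<ge> mu * real N" by linarith
    hence "alphaA w2 > mu" using alpha_round w2 by auto
    then show "w2 \<in> H" using w2 unfolding H_def by simp
  qed
  have LHun: "{1..W} = L \<union> H" using alpha_neq unfolding L_def H_def by (auto simp: neq_iff)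
  have LHdis: "L \<inter> H = {}" unfolding L_def H_def by auto
  have finL: "finite L" "finite H" unfolding L_def H_def by auto
  have Lne: "L \<noteq> {}" using L_nonempty unfolding L_def by auto
  have kL: "k \<in> L" unfolding k_def using finL Lne by simp
  have Lle: "\<And>w. w \<in> L \<Longrightarrow> w \<le> k" unfolding k_def using finL by simp
  have k1: "1 \<le> k" "k \<le> W" using kL unfolding L_def by auto
  have Hge: "k + 1 \<le> w" if "w \<in> H" for w
  proof (rule ccontr)
    assume "\<not> k + 1 \<le> w"
    hence "k \<in> H" using Hup[OF that] k1 by simp
    then show False using kL LHdis by auto
  qed
  obtain w0 where "w0 \<in> H" using H_nonempty unfolding H_def by auto
  hence kW: "k + 1 \<le> W" using Hge[of w0] unfolding H_def by auto
  have k1H: "k + 1 \<in> H"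
  proof -
    have "k + 1 \<in> {1..W}" using kW by simp
    moreover have "k + 1 \<notin> L" using Lle by fastforce
    ultimately show ?thesis using LHun by auto
  qed
  have LsubW: "L \<subseteq> {1..W}" "H \<subseteq> {1..W}" using LHun by auto
  have dmono: "d n w1 \<le> d n w2" if "n < N" "w1 \<in> {1..W}" "w2 \<in> {1..W}" "w1 \<le> w2" for n w1 w2
  proof (cases "w1 = w2")
    case False
    hence lt: "w1 < w2" using that by simp
    have "v n w1 Acc < v n w2 Acc" using vA_incr that(1,2,3) lt by blast
    moreover have "v n w1 Rej > v n w2 Rej" using vR_decr that(1,2,3) lt by blast
    ultimately show ?thesis unfolding d_def by simp
  qed simp
  have dB: "- real B \<le> d n w \<and> d n w \<le> real B" if "n < N" "w \<in> {1..W}" for n w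
  proof -
    have "v n w Acc \<le> B" "v n w Rej \<le> B" using v_bound that by auto
    then show ?thesis unfolding d_def by simp
  qed
  have d1: "d n w \<ge> 1 \<or> d n w \<le> -1" if "n < N" "w \<in> {1..W}" for n w
  proof -
    have "v n w Acc \<noteq> v n w Rej" using v_neq that by auto
    hence "v n w Acc \<ge> v n w Rej + 1 \<or> v n w Rej \<ge> v n w Acc + 1" by auto
    then show ?thesis unfolding d_def by auto
  qed
  have fr_iff: "friendly mu W alphaA v n \<longleftrightarrow> d n k > 0" if n: "n < N" for n
  proof
    assume "friendly mu W alphaA v n"
    then obtain w where w: "w \<in> {1..W}" "alphaA w < mu" "v n w Acc > v n w Rej"
      unfolding friendly_def by auto
    have "w \<in> L" using w unfolding L_def by simp
    hence "d n w \<le> d n k" using dmono[OF n w(1)] Lle kL LsubW by auto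
    moreover have "d n w > 0" using w unfolding d_def by simp
    ultimately show "d n k > 0" by simp
  next
    assume "d n k > 0"
    then show "friendly mu W alphaA v n" unfolding friendly_def d_def
      using kL unfolding L_def by auto
  qed
  have unfr_iff: "unfriendly mu W alphaA v n \<longleftrightarrow> d n (k+1) < 0" if n: "n < N" for n
  proof
    assume "unfriendly mu W alphaA v n"
    then obtain w where w: "w \<in> {1..W}" "alphaA w > mu" "v n w Rej > v n w Acc"
      unfolding unfriendly_def by auto
    have "w \<in> H" using w unfolding H_def by simp
    hence "d n (k+1) \<le> d n w" using dmono[OF n _ w(1)] Hge kW by auto
    moreover have "d n w < 0" using w unfolding d_def by simp
    ultimately show "d n (k+1) < 0" by simp
  next
    assume "d n (k+1) < 0"
    then show "unfriendly mu W alphaA v n" unfolding unfriendly_def d_def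
      using k1H unfolding H_def by auto
  qed
  show ?thesis unfolding strong_BNE_def
  proof
    assume "\<exists>D Sg'. D \<subseteq> {0..<N} \<and> valid_profile N M Sg' \<and>
          (\<forall>n<N. n \<notin> D \<longrightarrow> (\<forall>m\<in>{1..M}. Sg' n m = Sg n m)) \<and>
          (\<forall>n\<in>D. exp_util N mu W M P Ps v Sg' n \<ge> exp_util N mu W M P Ps v Sg n) \<and>
          (\<exists>n\<in>D. exp_util N mu W M P Ps v Sg' n > exp_util N mu W M P Ps v Sg n + real W * real B * ((real W - 1) * real B + 1) * e)"
    then obtain D Sg' where D: "D \<subseteq> {0..<N}" and valid': "valid_profile N M Sg'"
      and same: "\<forall>n<N. n \<notin> D \<longrightarrow> (\<forall>m\<in>{1..M}. Sg' n m = Sg n m)"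
      and weak: "\<forall>n\<in>D. exp_util N mu W M P Ps v Sg' n \<ge> exp_util N mu W M P Ps v Sg n"
      and strict: "\<exists>n\<in>D. exp_util N mu W M P Ps v Sg' n > exp_util N mu W M P Ps v Sg n + real W * real B * ((real W - 1) * real B + 1) * e"
      by blast
    define eps where "eps = real W * real B * ((real W - 1) * real B + 1) * e"
    define gain where "gain = (\<lambda>n. exp_util N mu W M P Ps v Sg' n - exp_util N mu W M P Ps v Sg n)"
    obtain g where g: "g \<in> D" "gain g > eps" using strict unfolding gain_def eps_def by auto
    have gN: "g < N" using g D by auto
    have gain0: "gain n \<ge> 0" if "n \<in> D" for n using weak that unfolding gain_def by auto
    define la where "la = (\<lambda>w. lamA N mu M Ps Sg w)"
    define la' where "la' = (\<lambda>w. lamA N mu M Ps Sg' w)"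
    have psw: "(\<forall>m\<in>{1..M}. 0 \<le> Ps m w)" "(\<Sum>m\<in>{1..M}. Ps m w) = 1" if "w \<in> {1..W}" for w
      using sig_nonneg sig_sum that by auto
    have laf: "0 \<le> la w" "la w \<le> 1" "lamR N mu M Ps Sg w = 1 - la w" if "w \<in> {1..W}" for w
      using lam_facts[where N=N and M=M and Sg=Sg and Ps=Ps and w=w and mu=mu, OF valid psw[OF that]] unfolding la_def by auto
    have laf': "0 \<le> la' w" "la' w \<le> 1" "lamR N mu M Ps Sg' w = 1 - la' w" if "w \<in> {1..W}" for w
      using lam_facts[where N=N and M=M and Sg=Sg' and Ps=Ps and w=w and mu=mu, OF valid' psw[OF that]] unfolding la'_def by auto
    have gain_eq: "gain n = (\<Sum>w\<in>{1..W}. P w * ((la' w - la w) * d n w))" for n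
    proof -
      have "gain n = (\<Sum>w\<in>{1..W}. P w * (la' w * real (v n w Acc) + lamR N mu M Ps Sg' w * real (v n w Rej))
          - P w * (la w * real (v n w Acc) + lamR N mu M Ps Sg w * real (v n w Rej)))"
        unfolding gain_def exp_util_def la_def la'_def by (simp add: sum_subtractf)
      also have "\<dots> = (\<Sum>w\<in>{1..W}. P w * ((la' w - la w) * d n w))"
      proof (rule sum.cong)
        fix w assume w: "w \<in> {1..W}"
        show "P w * (la' w * real (v n w Acc) + lamR N mu M Ps Sg' w * real (v n w Rej))
          - P w * (la w * real (v n w Acc) + lamR N mu M Ps Sg w * real (v n w Rej)) =
          P w * ((la' w - la w) * d n w)"
          unfolding laf(3)[OF w] laf'(3)[OF w] d_def by (simp add: algebra_simps)
      qed simp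
      finally show ?thesis .
    qed
    define E where "E = (\<Sum>w\<in>L. P w * la w) + (\<Sum>w\<in>H. P w * (1 - la w))"
    have Pnn: "0 \<le> P w" if "w \<in> {1..W}" for w using prior_pos that by (simp add: less_imp_le)
    have E0: "0 \<le> E" unfolding E_def
      using Pnn laf LsubW by (intro add_nonneg_nonneg sum_nonneg mult_nonneg_nonneg) auto
    have fidE: "fidelity N mu W M P Ps alphaA Sg = (\<Sum>w\<in>L. P w * (1 - la w)) + (\<Sum>w\<in>H. P w * la w)"
      unfolding fidelity_def L_def[symmetric] H_def[symmetric] la_def
      using laf(3) LsubW by (intro arg_cong2[where f="(+)"] sum.cong) (auto simp: la_def)
    have Psum: "(\<Sum>w\<in>L. P w) + (\<Sum>w\<in>H. P w) = 1"
      using prior_sum LHun LHdis finL by (simp add: sum.union_disjoint[symmetric])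
    have "fidelity N mu W M P Ps alphaA Sg + E = (\<Sum>w\<in>L. P w) + (\<Sum>w\<in>H. P w)"
      unfolding fidE E_def by (simp add: right_diff_distrib sum_subtractf)
    hence Ee: "E \<le> e" using fid Psum by linarith
    have e0: "0 \<le> e" using E0 Ee by linarith
    define Lp where "Lp = (\<Sum>w\<in>L. P w * max (la' w - la w) 0)"
    define Hm where "Hm = (\<Sum>w\<in>H. P w * max (la w - la' w) 0)"
    have Lp0: "0 \<le> Lp" unfolding Lp_def using Pnn LsubW by (intro sum_nonneg mult_nonneg_nonneg) auto
    have Hm0: "0 \<le> Hm" unfolding Hm_def using Pnn LsubW by (intro sum_nonneg mult_nonneg_nonneg) auto
    define be where "be = real B * e"
    have be0: "0 \<le> be" unfolding be_def using e0 by simp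
    have key: "gain n \<le> d n k * Lp - d n (k+1) * Hm + be" if n: "n < N" for n
    proof -
      have "gain n = (\<Sum>w\<in>L. P w * ((la' w - la w) * d n w)) + (\<Sum>w\<in>H. P w * ((la' w - la w) * d n w))"
        unfolding gain_eq LHun using finL LHdis by (simp add: sum.union_disjoint)
      also have "\<dots> \<le> (\<Sum>w\<in>L. d n k * (P w * max (la' w - la w) 0) + real B * (P w * la w))
                     + (\<Sum>w\<in>H. - d n (k+1) * (P w * max (la w - la' w) 0) + real B * (P w * (1 - la w)))"
      proof (rule add_mono; rule sum_mono)
        fix w assume w: "w \<in> L"
        have wW: "w \<in> {1..W}" using w LsubW by auto
        show "P w * ((la' w - la w) * d n w) \<le> d n k * (P w * max (la' w - la w) 0) + real B * (P w * la w)"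
        proof (rule termL)
          have kW': "k \<in> {1..W}" using kL LsubW by auto
          show "d n w \<le> d n k" using dmono[OF n wW kW' Lle[OF w]] .
        qed (use Pnn[OF wW] laf[OF wW] laf'[OF wW] dB[OF n wW] in auto)
      next
        fix w assume w: "w \<in> H"
        have wW: "w \<in> {1..W}" using w LsubW by auto
        have "k + 1 \<in> {1..W}" using kW by simp
        show "P w * ((la' w - la w) * d n w) \<le> - d n (k+1) * (P w * max (la w - la' w) 0) + real B * (P w * (1 - la w))"
          by (rule termH) (use Pnn[OF wW] laf[OF wW] laf'[OF wW] dmono[OF n \<open>k+1 \<in> {1..W}\<close> wW] Hge[OF w] dB[OF n wW] in auto)
      qed
      also have "\<dots> = d n k * Lp - d n (k+1) * Hm + real B * E"
      proof -
        have s1: "(\<Sum>w\<in>L. d n k * (P w * max (la' w - la w) 0) + real B * (P w * la w))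
           = d n k * Lp + real B * (\<Sum>w\<in>L. P w * la w)"
          unfolding Lp_def by (simp add: sum.distrib sum_distrib_left)
        have s2: "(\<Sum>w\<in>H. - d n (k+1) * (P w * max (la w - la' w) 0) + real B * (P w * (1 - la w)))
           = - d n (k+1) * Hm + real B * (\<Sum>w\<in>H. P w * (1 - la w))"
          unfolding Hm_def by (simp only: sum.distrib sum_distrib_left)
        show ?thesis unfolding s1 s2 E_def by (simp add: algebra_simps)
      qed
      also have "\<dots> \<le> d n k * Lp - d n (k+1) * Hm + be"
        unfolding be_def using Ee by (simp add: mult_left_mono)
      finally show ?thesis .
    qed
    have pA_le1: "voteA_prob M Ps Sg' n w \<le> 1" "0 \<le> voteA_prob M Ps Sg' n w" if "n < N" "w \<in> {1..W}" for n w
      using pA_range[where N=N and M=M and Sg=Sg' and Ps=Ps and w=w, OF valid' psw[OF that(2)] that(1)] by auto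
    have pA_same: "voteA_prob M Ps Sg' n w = voteA_prob M Ps Sg n w" if "n < N" "n \<notin> D" for n w
      unfolding voteA_prob_def using same that by (intro sum.cong) auto
    have allF: "Lp = 0" if aF: "\<forall>n\<in>D. d n k > 0"
    proof -
      have "la' w \<le> la w" if w: "w \<in> {1..W}" for w
        unfolding la_def la'_def
      proof (rule lamA_mono[where N=N and M=M and Sg=Sg' and Sg'=Sg and Ps=Ps and w=w and mu=mu, OF valid' valid psw[OF w]], intro allI impI)
        fix n assume n: "n < N"
        show "voteA_prob M Ps Sg' n w \<le> voteA_prob M Ps Sg n w"
        proof (cases "n \<in> D")
          case True
          hence "friendly mu W alphaA v n" using aF fr_iff n by auto
          hence "\<forall>m\<in>{1..M}. Sg n m = 1" using regular n unfolding regular_profile_def by auto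
          hence "voteA_prob M Ps Sg n w = 1" unfolding voteA_prob_def using psw[OF w] by simp
          then show ?thesis using pA_le1[OF n w] by simp
        qed (use pA_same n in auto)
      qed
      then show ?thesis unfolding Lp_def using LsubW by (intro sum.neutral) auto
    qed
    have allU: "Hm = 0" if aU: "\<forall>n\<in>D. d n (k+1) < 0"
    proof -
      have "la w \<le> la' w" if w: "w \<in> {1..W}" for w
        unfolding la_def la'_def
      proof (rule lamA_mono[where N=N and M=M and Sg=Sg and Sg'=Sg' and Ps=Ps and w=w and mu=mu, OF valid valid' psw[OF w]], intro allI impI)
        fix n assume n: "n < N"
        show "voteA_prob M Ps Sg n w \<le> voteA_prob M Ps Sg' n w"
        proof (cases "n \<in> D")
          case True
          hence "unfriendly mu W alphaA v n" using aU unfr_iff n by auto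
          hence "\<forall>m\<in>{1..M}. Sg n m = 0" using regular n unfolding regular_profile_def by auto
          hence "voteA_prob M Ps Sg n w = 0" unfolding voteA_prob_def by simp
          then show ?thesis using pA_le1[OF n w] by simp
        qed (use pA_same n in auto)
      qed
      then show ?thesis unfolding Hm_def using LsubW by (intro sum.neutral) auto
    qed
    have Wge: "real W \<ge> 2" using k1 kW by simp
    have "real B * (real B + 1) \<le> real W * real B * ((real W - 1) * real B + 1)"
    proof -
      have "real B \<le> (real W - 1) * real B" using Wge by (simp add: mult_le_cancel_right1)
      hence "real B * (real B + 1) \<le> real B * ((real W - 1) * real B + 1)" by (simp add: mult_left_mono)
      also have "\<dots> \<le> real W * (real B * ((real W - 1) * real B + 1))"
      proof -
        have "0 \<le> (real W - 1) * real B + 1" using Wge by (intro add_nonneg_nonneg mult_nonneg_nonneg) auto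
        hence nn: "0 \<le> real B * ((real W - 1) * real B + 1)" by simp
        show ?thesis using mult_right_mono[OF _ nn, of 1 "real W"] Wge by simp
      qed
      finally show ?thesis by (simp add: algebra_simps)
    qed
    hence "real B * (real B + 1) * e \<le> eps" unfolding eps_def using e0 by (simp add: mult_right_mono)
    hence epsb: "real B * be + be \<le> eps" unfolding be_def by (simp add: algebra_simps)
    have Bbe: "0 \<le> real B * be" using be0 by simp
    have dgB: "d g k \<le> real B" "- real B \<le> d g (k+1)"
      using dB[OF gN, of k] dB[OF gN, of "k+1"] k1 kW by auto
    have dgm: "d g k \<le> d g (k+1)" using dmono[OF gN, of k "k+1"] k1 kW by auto
    have kg: "gain g \<le> d g k * Lp - d g (k+1) * Hm + be" using key[OF gN] .
    have k1W: "k \<in> {1..W}" "k + 1 \<in> {1..W}" using k1 kW by auto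
    show False
    proof (cases "d g k > 0")
      case True
      hence dg1: "d g k \<ge> 1" using d1[OF gN k1W(1)] by auto
      show False
      proof (cases "\<forall>n\<in>D. d n k > 0")
        case True
        hence "Lp = 0" by (rule allF)
        hence "d g k * Lp = 0" by simp
        moreover have "0 \<le> d g (k+1) * Hm" using dg1 dgm Hm0 by simp
        ultimately show False using kg g(2) epsb Bbe by linarith
      next
        case False
        then obtain n where n: "n \<in> D" "\<not> d n k > 0" by auto
        have nN: "n < N" using n D by auto
        have "d n k \<le> -1" using d1[OF nN k1W(1)] n by auto
        moreover have "d n k \<le> d n (k+1)" using dmono[OF nN k1W] by simp
        moreover have "0 \<le> d n k * Lp - d n (k+1) * Hm + be" using key[OF nN] gain0[OF n(1)] by linarith
        ultimately have "d g k * Lp - d g (k+1) * Hm + be \<le> real B * be + be"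
          using final1[of "d g k" "real B" "d g (k+1)" "d n k" "d n (k+1)" Lp Hm be] dg1 dgB dgm Lp0 Hm0 be0
          by linarith
        then show False using kg g(2) epsb by linarith
      qed
    next
      case False
      hence dgn: "d g k \<le> -1" using d1[OF gN k1W(1)] by auto
      show False
      proof (cases "d g (k+1) > 0")
        case True
        have "d g k * Lp \<le> 0" using dgn Lp0 by (simp add: mult_nonpos_nonneg)
        moreover have "0 \<le> d g (k+1) * Hm" using True Hm0 by simp
        ultimately show False using kg g(2) epsb Bbe by linarith
      next
        case False
        hence dg1: "d g (k+1) \<le> -1" using d1[OF gN k1W(2)] by auto
        show False
        proof (cases "\<forall>n\<in>D. d n (k+1) < 0")
          case True
          hence "Hm = 0" by (rule allU)
          hence "d g (k+1) * Hm = 0" by simp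
          moreover have "d g k * Lp \<le> 0" using dgn Lp0 by (simp add: mult_nonpos_nonneg)
          ultimately show False using kg g(2) epsb Bbe by linarith
        next
          case False
          then obtain n where n: "n \<in> D" "\<not> d n (k+1) < 0" by auto
          have nN: "n < N" using n D by auto
          have a1: "- d n (k+1) \<le> -1" using d1[OF nN k1W(2)] n by auto
          have a2: "- d n (k+1) \<le> - d n k" using dmono[OF nN k1W] by simp
          have "0 \<le> d n k * Lp - d n (k+1) * Hm + be" using key[OF nN] gain0[OF n(1)] by linarith
          hence a3: "0 \<le> (- d n (k+1)) * Hm - (- d n k) * Lp + be" by simp
          have "(- d g (k+1)) * Hm - (- d g k) * Lp + be \<le> real B * be + be"
            by (rule final1[OF _ _ _ a1 a2 Hm0 Lp0 be0 a3]) (use dg1 dgB dgm in auto)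
          hence "d g k * Lp - d g (k+1) * Hm + be \<le> real B * be + be" by simp
          then show False using kg g(2) epsb by linarith
        qed
      qed
    qed
  qed
qed

end
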